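(* Let $\Omega$ be a domain partitioned as $\Omega=\bigcup_{k=1}^K\Omega_k$, let $X$, $Y$, $Z$ be spaces as described in the context, with linear operators $A: X\to Y$ and $B:X\to Z$, data $f\in Y$, $g\in Z$, and a weight $\tau\ge 0$. Suppose the boundary value problem $Au=f$ in $\Omega$, $Bu=g$ on $\partial\Omega$ has a solution $u^*$ with an approximating sequence $\{u_n^*\}_{n\ge1}\subset X$ (in the sense of the context). For each $k=1,\dots,K$ let $G_k$ be a compact subset of $Y|_{\Omega_k}$ containing $\{(Au_n^*-f)|_{\Omega_k}\}_{n\ge 1}$, and set $$\tilde V_K=\{v\in X:\ (Av-f)|_{\Omega_k}\in G_k\ \text{for all } k=1,\dots,K\}.$$ Then for every $\epsilon>0$ there exist integers $N_{\epsilon,1},\dots,N_{\epsilon,K}$ such that, with $\mathbf N_{\epsilon,K}=(N_{\epsilon,1},\dots,N_{\epsilon,K})$, $$\mathcal J_\tau^{h,\mathbf N_{\epsilon,K}}(v)\ \ge\ \mathcal J_\tau(v)-\epsilon\qquad\text{for all } v\in\tilde V_K .$$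
   Context: Setting: $X$ is a space of functions on $\Omega$; $Y$ is a Hilbert space of functions on $\Omega$ and, for each subdomain $\Omega_k$, $Y|_{\Omega_k}$ denotes the Hilbert space with the same structure as $Y$ but over $\Omega_k$, such that $\|w\|_Y^2=\sum_{k=1}^K\|w|_{\Omega_k}\|_{Y|_{\Omega_k}}^2$ (e.g. $Y=L^2(\Omega)$, $Y|_{\Omega_k}=L^2(\Omega_k)$); $Z$ is a normed space of functions on $\partial\Omega$. For each $k$, $\{\Phi_{k,i}\}_{i\ge1}$ is a complete orthonormal basis of $Y|_{\Omega_k}$, and $(w,\Phi_{k,i})_Y$ denotes the inner product in $Y|_{\Omega_k}$ of $w|_{\Omega_k}$ with $\Phi_{k,i}$. The loss functionals are $$\mathcal J_\tau(v)=\|f-Av\|_Y^2+\tau\|Bv-g\|_Z^2,\qquad \mathcal J_\tau^{h,\mathbf N}(v)=\sum_{k=1}^K\sum_{i=1}^{N_k}(f-Av,\Phi_{k,i})_Y^2+\tau\|Bv-g\|_Z^2,$$ for $\mathbf N=(N_1,\dots,N_K)$. Solution concept: $u^*$ (in a space $V$) is a solution of $Au=f$, $Bu=g$ if there is a sequence $\{u_n^*\}\subset X$ with $\|u_n^*-u^*\|_V\to0$ and $\|Au_n^*-f\|_Y+\|Bu_n^*-g\|_Z\to 0$; such a sequence is called an approximating sequence of $u^*$. *)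

theory Defs
  imports "HOL-Analysis.Analysis"
begin

definition linear_on_set :: "'v::real_vector set \<Rightarrow> ('v \<Rightarrow> 'y::real_vector) \<Rightarrow> bool" where
  "linear_on_set X T \<longleftrightarrow> subspace X \<and>
     (\<forall>x\<in>X. \<forall>y\<in>X. T (x + y) = T x + T y) \<and> (\<forall>c. \<forall>x\<in>X. T (c *\<^sub>R x) = c *\<^sub>R T x)"

definition complete_orthonormal_basis :: "'w::{real_inner,complete_space} set \<Rightarrow> (nat \<Rightarrow> 'w) \<Rightarrow> bool" where
  "complete_orthonormal_basis S Phi \<longleftrightarrow>
     (\<forall>i\<ge>1. Phi i \<in> S) \<and>
     (\<forall>i\<ge>1. \<forall>j\<ge>1. inner (Phi i) (Phi j) = (if i = j then 1 else 0)) \<and>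
     closure (span (Phi ` {1..})) = S"

definition approximating_sequence ::
  "'v::real_normed_vector set \<Rightarrow> ('v \<Rightarrow> 'y::real_normed_vector) \<Rightarrow> ('v \<Rightarrow> 'z::real_normed_vector)
   \<Rightarrow> 'y \<Rightarrow> 'z \<Rightarrow> 'v \<Rightarrow> (nat \<Rightarrow> 'v) \<Rightarrow> bool" where
  "approximating_sequence X A B f g ustar u \<longleftrightarrow>
     (\<forall>n. u n \<in> X) \<and>
     (\<lambda>n. norm (u n - ustar)) \<longlonglongrightarrow> 0 \<and>
     (\<lambda>n. norm (A (u n) - f) + norm (B (u n) - g)) \<longlonglongrightarrow> 0"

definition loss_J ::
  "('v \<Rightarrow> 'y::real_normed_vector) \<Rightarrow> ('v \<Rightarrow> 'z::real_normed_vector) \<Rightarrow> 'y \<Rightarrow> 'z \<Rightarrow> real \<Rightarrow> 'v \<Rightarrow> real" where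
  "loss_J A B f g \<tau> v = (norm (f - A v))\<^sup>2 + \<tau> * (norm (B v - g))\<^sup>2"

text \<open>The discretised loss J_tau^{h,N}; r k is the restriction to Omega_k, Phi k i the basis.\<close>
definition loss_Jh ::
  "nat \<Rightarrow> (nat \<Rightarrow> 'y \<Rightarrow> 'w::real_inner) \<Rightarrow> (nat \<Rightarrow> nat \<Rightarrow> 'w) \<Rightarrow> (nat \<Rightarrow> nat)
   \<Rightarrow> ('v \<Rightarrow> 'y::real_normed_vector) \<Rightarrow> ('v \<Rightarrow> 'z::real_normed_vector) \<Rightarrow> 'y \<Rightarrow> 'z \<Rightarrow> real \<Rightarrow> 'v \<Rightarrow> real" where
  "loss_Jh K r Phi N A B f g \<tau> v =
     (\<Sum>k=1..K. \<Sum>i=1..N k. (inner (r k (f - A v)) (Phi k i))\<^sup>2) + \<tau> * (norm (B v - g))\<^sup>2"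

end

theory Submission
  imports Defs
begin

lemma bessel_dist:
  fixes Phi :: "nat \<Rightarrow> 'w::real_inner"
  assumes on: "\<forall>i\<ge>1. \<forall>j\<ge>1. inner (Phi i) (Phi j) = (if i = j then 1 else 0)"
    and y: "y \<in> span (Phi ` {1..N})"
  shows "(norm w)\<^sup>2 - (\<Sum>i=1..N. (inner w (Phi i))\<^sup>2) \<le> (norm (w - y))\<^sup>2"
proof -
  define p where "p = (\<Sum>i=1..N. inner w (Phi i) *\<^sub>R Phi i)"
  have h1: "inner p (Phi j) = inner w (Phi j)" if "j \<in> {1..N}" for j
  proof -
    have "inner p (Phi j) = (\<Sum>i=1..N. inner w (Phi i) * (if i = j then 1 else 0))"
      unfolding p_def inner_sum_left inner_scaleR_left
      by (rule sum.cong) (use that on in auto)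
    also have "\<dots> = inner w (Phi j)" using that by (simp add: if_distrib cong: if_cong)
    finally show ?thesis .
  qed
  have h2: "inner (w - p) z = 0" if "z \<in> span (Phi ` {1..N})" for z
    using that
  proof (rule span_induct)
    show "subspace {z. inner (w - p) z = 0}"
      by (auto simp: subspace_def inner_add_right)
  next
    fix x assume "x \<in> Phi ` {1..N}"
    then show "inner (w - p) x = 0" using h1 by (auto simp: inner_diff_left)
  qed
  have pin: "p \<in> span (Phi ` {1..N})"
    unfolding p_def by (intro span_sum span_scale span_base) auto
  have o1: "inner (w - p) (p - y) = 0" by (rule h2) (intro span_diff pin y)
  have o2: "inner (w - p) p = 0" by (rule h2) (rule pin)
  have wp: "inner w p = (\<Sum>i=1..N. (inner w (Phi i))\<^sup>2)"
    unfolding p_def inner_sum_right inner_scaleR_right by (simp add: power2_eq_square)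
  have "(norm (w - y))\<^sup>2 = (norm ((w - p) + (p - y)))\<^sup>2" by simp
  also have "\<dots> = (norm (w - p))\<^sup>2 + (norm (p - y))\<^sup>2"
    using o1 by (intro norm_add_Pythagorean) (simp add: orthogonal_def)
  also have "(norm (w - p))\<^sup>2 = (norm w)\<^sup>2 - (\<Sum>i=1..N. (inner w (Phi i))\<^sup>2)"
    using o2 wp by (simp add: power2_norm_eq_inner inner_diff_left inner_diff_right inner_commute)
  finally show ?thesis by simp
qed

lemma span_finite_stage:
  fixes Phi :: "nat \<Rightarrow> 'w::real_vector"
  assumes "y \<in> span (Phi ` {1..})"
  shows "\<exists>M. y \<in> span (Phi ` {1..M})"
  using assms
proof (rule span_induct[where P="\<lambda>y. \<exists>M. y \<in> span (Phi ` {1..M})"])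
  show "subspace {y. \<exists>M. y \<in> span (Phi ` {1..M})}"
    unfolding subspace_def
  proof (intro conjI)
    show "0 \<in> {y. \<exists>M. y \<in> span (Phi ` {1..M})}" by (auto intro: span_zero)
  next
    show "\<forall>x\<in>{y. \<exists>M. y \<in> span (Phi ` {1..M})}. \<forall>y\<in>{y. \<exists>M. y \<in> span (Phi ` {1..M})}. x + y \<in> {y. \<exists>M. y \<in> span (Phi ` {1..M})}"
    proof (intro ballI)
      fix x y assume "x \<in> {y. \<exists>M. y \<in> span (Phi ` {1..M})}" "y \<in> {y. \<exists>M. y \<in> span (Phi ` {1..M})}"
      then obtain M1 M2 where "x \<in> span (Phi ` {1..M1})" "y \<in> span (Phi ` {1..M2})" by auto
      moreover have "span (Phi ` {1..M1}) \<subseteq> span (Phi ` {1..max M1 M2})" "span (Phi ` {1..M2}) \<subseteq> span (Phi ` {1..max M1 M2})"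
        by (intro span_mono image_mono; auto)+
      ultimately have "x + y \<in> span (Phi ` {1..max M1 M2})" by (blast intro: span_add)
      then show "x + y \<in> {y. \<exists>M. y \<in> span (Phi ` {1..M})}" by blast
    qed
  next
    show "\<forall>c. \<forall>x\<in>{y. \<exists>M. y \<in> span (Phi ` {1..M})}. c *\<^sub>R x \<in> {y. \<exists>M. y \<in> span (Phi ` {1..M})}"
      by (blast intro: span_scale)
  qed
next
  fix x assume "x \<in> Phi ` {1..}"
  then obtain i where "i \<ge> 1" "x = Phi i" by auto
  then have "x \<in> span (Phi ` {1..i})" by (intro span_base) auto
  then show "\<exists>M. x \<in> span (Phi ` {1..M})" by blast
qed

lemma finite_bound:
  assumes "finite T" "\<forall>t\<in>T. \<exists>M::nat. P t M" "\<And>t M N. P t M \<Longrightarrow> M \<le> N \<Longrightarrow> P t N"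
  shows "\<exists>N. \<forall>t\<in>T. P t N"
  using assms(1,2)
proof (induction T rule: finite_induct)
  case empty then show ?case by auto
next
  case (insert x F)
  then obtain N where N: "\<forall>t\<in>F. P t N" by auto
  obtain M where M: "P x M" using insert by auto
  have "P x (max M N)" by (rule assms(3)[OF M]) simp
  moreover have "\<forall>t\<in>F. P t (max M N)" proof
    fix t assume "t \<in> F" then show "P t (max M N)" by (rule assms(3)[OF N[rule_format]]) simp
  qed
  ultimately show ?case by blast
qed

lemma unif_parseval:
  fixes Phi :: "nat \<Rightarrow> 'w::{real_inner,complete_space}"
  assumes cob: "complete_orthonormal_basis S Phi" and G: "compact G" "G \<subseteq> S" and e: "e > 0"
  shows "\<exists>N. \<forall>w\<in>G. (norm w)\<^sup>2 - (\<Sum>i=1..N. (inner w (Phi i))\<^sup>2) \<le> e"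
proof -
  have on: "\<forall>i\<ge>1. \<forall>j\<ge>1. inner (Phi i) (Phi j) = (if i = j then 1 else 0)"
    and cl: "closure (span (Phi ` {1..})) = S" using cob by (auto simp: complete_orthonormal_basis_def)
  define d where "d = sqrt e / 2"
  have d: "d > 0" using e by (simp add: d_def)
  obtain T where T: "finite T" "T \<subseteq> G" "G \<subseteq> (\<Union>x\<in>T. ball x d)"
  proof -
    have "\<exists>k. finite k \<and> k \<subseteq> G \<and> G \<subseteq> (\<Union>x\<in>k. ball x d)"
      using seq_compact_imp_totally_bounded[OF compact_imp_seq_compact[OF G(1)]] d by blast
    then show ?thesis using that by blast
  qed
  have "\<forall>t\<in>T. \<exists>M. \<exists>y\<in>span (Phi ` {1..M}). dist y t < d"
  proof
    fix t assume "t \<in> T"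
    then have "t \<in> closure (span (Phi ` {1..}))" using T G cl by auto
    then obtain y where "y \<in> span (Phi ` {1..})" "dist y t < d"
      using d unfolding closure_approachable by blast
    then show "\<exists>M. \<exists>y\<in>span (Phi ` {1..M}). dist y t < d"
      using span_finite_stage by blast
  qed
  then have "\<exists>N. \<forall>t\<in>T. \<exists>y\<in>span (Phi ` {1..N}). dist y t < d"
  proof (rule finite_bound[OF T(1), of "\<lambda>t M. \<exists>y\<in>span (Phi ` {1..M}). dist y t < d"])
    fix t M N assume "\<exists>y\<in>span (Phi ` {1..M}). dist y t < d" "M \<le> N"
    moreover have "span (Phi ` {1..M}) \<subseteq> span (Phi ` {1..N})"
      using \<open>M \<le> N\<close> by (intro span_mono image_mono) auto
    ultimately show "\<exists>y\<in>span (Phi ` {1..N}). dist y t < d" by blast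
  qed
  then obtain N where N: "\<forall>t\<in>T. \<exists>y\<in>span (Phi ` {1..N}). dist y t < d" by blast
  show ?thesis
  proof (intro exI ballI)
    fix w assume "w \<in> G"
    then obtain t where t: "t \<in> T" "dist t w < d" using T by auto
    then obtain y where y: "y \<in> span (Phi ` {1..N})" "dist y t < d" using N by auto
    have "norm (w - y) < 2 * d" using t y dist_triangle[of y w t]
      by (simp add: dist_norm norm_minus_commute dist_commute)
    then have "(norm (w - y))\<^sup>2 \<le> (2 * d)\<^sup>2"
      by (intro power_mono) auto
    also have "\<dots> = e" using e by (simp add: d_def)
    finally show "(norm w)\<^sup>2 - (\<Sum>i=1..N. (inner w (Phi i))\<^sup>2) \<le> e"
      using bessel_dist[OF on y(1), of w] by linarith
  qed
qed

theorem mainTheorem1: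
  fixes X :: "'v::real_normed_vector set"
    and A :: "'v \<Rightarrow> 'y::real_normed_vector"
    and B :: "'v \<Rightarrow> 'z::real_normed_vector"
    and K :: nat
    and S :: "nat \<Rightarrow> 'w::{real_inner,complete_space} set"
    and r :: "nat \<Rightarrow> 'y \<Rightarrow> 'w"
    and Phi :: "nat \<Rightarrow> nat \<Rightarrow> 'w"
    and f :: 'y and g :: 'z and \<tau> :: real
    and ustar :: 'v and u :: "nat \<Rightarrow> 'v"
    and G :: "nat \<Rightarrow> 'w set"
  assumes "linear_on_set X A" and "linear_on_set X B"
    and "\<And>k. k \<in> {1..K} \<Longrightarrow> linear (r k)"
    and "\<And>k w. k \<in> {1..K} \<Longrightarrow> r k w \<in> S k"
    and "\<And>w. (norm w)\<^sup>2 = (\<Sum>k=1..K. (norm (r k w))\<^sup>2)"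
    and "\<And>k. k \<in> {1..K} \<Longrightarrow> complete_orthonormal_basis (S k) (Phi k)"
    and "\<tau> \<ge> 0"
    and "approximating_sequence X A B f g ustar u"
    and "\<And>k. k \<in> {1..K} \<Longrightarrow> compact (G k) \<and> G k \<subseteq> S k"
    and "\<And>k n. k \<in> {1..K} \<Longrightarrow> r k (A (u n) - f) \<in> G k"
  shows "\<forall>\<epsilon>>0. \<exists>N :: nat \<Rightarrow> nat. \<forall>v \<in> {v \<in> X. \<forall>k\<in>{1..K}. r k (A v - f) \<in> G k}.
           loss_Jh K r Phi N A B f g \<tau> v \<ge> loss_J A B f g \<tau> v - \<epsilon>"
proof (intro allI impI)
  fix \<epsilon> :: real assume eps: "\<epsilon> > 0"
  define e where "e = \<epsilon> / (real K + 1)"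
  have e: "e > 0" using eps by (simp add: e_def)
  have "\<forall>k\<in>{1..K}. \<exists>M. \<forall>w\<in>G k. (norm w)\<^sup>2 - (\<Sum>i=1..M. (inner w (Phi k i))\<^sup>2) \<le> e"
  proof
    fix k assume k: "k \<in> {1..K}"
    show "\<exists>M. \<forall>w\<in>G k. (norm w)\<^sup>2 - (\<Sum>i=1..M. (inner w (Phi k i))\<^sup>2) \<le> e"
      using unif_parseval[OF assms(6)[OF k] _ _ e] assms(9)[OF k] by blast
  qed
  then obtain N where N: "\<And>k w. k \<in> {1..K} \<Longrightarrow> w \<in> G k \<Longrightarrow>
      (norm w)\<^sup>2 - (\<Sum>i=1..N k. (inner w (Phi k i))\<^sup>2) \<le> e"
    by metis
  show "\<exists>N :: nat \<Rightarrow> nat. \<forall>v \<in> {v \<in> X. \<forall>k\<in>{1..K}. r k (A v - f) \<in> G k}.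
           loss_Jh K r Phi N A B f g \<tau> v \<ge> loss_J A B f g \<tau> v - \<epsilon>"
  proof (intro exI ballI)
    fix v assume v: "v \<in> {v \<in> X. \<forall>k\<in>{1..K}. r k (A v - f) \<in> G k}"
    have neg: "r k (f - A v) = - r k (A v - f)" if "k \<in> {1..K}" for k
    proof -
      have "f - A v = - (A v - f)" by simp
      then show ?thesis using linear_neg[OF assms(3)[OF that]] by metis
    qed
    have each: "(norm (r k (f - A v)))\<^sup>2 - (\<Sum>i=1..N k. (inner (r k (f - A v)) (Phi k i))\<^sup>2) \<le> e"
      if k: "k \<in> {1..K}" for k
      using N[OF k, of "r k (A v - f)"] v k neg[OF k] by simp
    have "(norm (f - A v))\<^sup>2 = (\<Sum>k=1..K. (norm (r k (f - A v)))\<^sup>2)" by (rule assms(5))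
    also have "\<dots> \<le> (\<Sum>k=1..K. (\<Sum>i=1..N k. (inner (r k (f - A v)) (Phi k i))\<^sup>2) + e)"
      by (rule sum_mono) (use each in force)
    also have "\<dots> = (\<Sum>k=1..K. \<Sum>i=1..N k. (inner (r k (f - A v)) (Phi k i))\<^sup>2) + real K * e"
      by (simp add: sum.distrib)
    also have "real K * e \<le> \<epsilon>"
      using eps by (simp add: e_def field_simps)
    finally show "loss_Jh K r Phi N A B f g \<tau> v \<ge> loss_J A B f g \<tau> v - \<epsilon>"
      unfolding loss_Jh_def loss_J_def by simp
  qed
qed

end
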